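(* Let $N\ge1$ and $0<k\le N$, and let $\mathfrak D(N,k)$ be the set of skew-Hermitian $N\times N$ complex matrices $A$ such that $A_{ij}=0$ unless $k$ divides $i-j$. Then $\mathfrak D(N,k)$ is a real Lie subalgebra of $\mathfrak u(N)$ and, with $d=\lfloor N/k\rfloor$ and $r=N-kd$, \[\mathfrak D(N,k)\cong\mathfrak u(d)^{k-r}\oplus\mathfrak u(d+1)^{r}\cong\mathfrak{su}(d)^{k-r}\oplus\mathfrak{su}(d+1)^{r}\oplus\mathfrak u(1)^k\] as Lie algebras. In particular $\dim\mathfrak D(N,k)=kd^2+2rd+r=d(N+r)+r$.
   Context: $\mathfrak u(n)$ denotes the Lie algebra of skew-Hermitian $n\times n$ complex matrices and $\mathfrak{su}(n)$ its traceless subalgebra, with the matrix commutator as bracket; $\lfloor\cdot\rfloor$ is the integer part. *)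

theory Defs
  imports Complex_Main "Jordan_Normal_Form.Matrix"
begin

definition u_alg :: "nat \<Rightarrow> complex mat set" where
  "u_alg n = {A \<in> carrier_mat n n. \<forall>i<n. \<forall>j<n. A $$ (i, j) = - cnj (A $$ (j, i))}"

definition su_alg :: "nat \<Rightarrow> complex mat set" where
  "su_alg n = {A \<in> u_alg n. (\<Sum>i<n. A $$ (i, i)) = 0}"

text \<open>D(N,k): skew-Hermitian matrices with A_ij = 0 unless k divides i - j
  (indices are 0-based here; divisibility of i - j is unaffected).\<close>
definition D_alg :: "nat \<Rightarrow> nat \<Rightarrow> complex mat set" where
  "D_alg N k = {A \<in> u_alg N. \<forall>i<N. \<forall>j<N.
      \<not> (int k dvd (int i - int j)) \<longrightarrow> A $$ (i, j) = 0}"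

definition mbr :: "complex mat \<Rightarrow> complex mat \<Rightarrow> complex mat" where
  "mbr A B = A * B - B * A"

definition rsc :: "real \<Rightarrow> complex mat \<Rightarrow> complex mat" where
  "rsc c A = complex_of_real c \<cdot>\<^sub>m A"

definition real_lie_subalg_u :: "complex mat set \<Rightarrow> nat \<Rightarrow> bool" where
  "real_lie_subalg_u S n \<longleftrightarrow> S \<subseteq> u_alg n \<and> 0\<^sub>m n n \<in> S \<and>
     (\<forall>A\<in>S. \<forall>B\<in>S. A + B \<in> S) \<and> (\<forall>c::real. \<forall>A\<in>S. rsc c A \<in> S) \<and>
     (\<forall>A\<in>S. \<forall>B\<in>S. mbr A B \<in> S)"

text \<open>Direct sum of matrix Lie algebras L_1 \<oplus> ... \<oplus> L_m, represented as lists of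
  blocks with componentwise operations.\<close>
definition dsum :: "complex mat set list \<Rightarrow> complex mat list set" where
  "dsum Ls = {xs. length xs = length Ls \<and> (\<forall>i<length Ls. xs ! i \<in> Ls ! i)}"

definition ladd :: "complex mat list \<Rightarrow> complex mat list \<Rightarrow> complex mat list" where
  "ladd xs ys = map2 (+) xs ys"

definition lsc :: "real \<Rightarrow> complex mat list \<Rightarrow> complex mat list" where
  "lsc c xs = map (rsc c) xs"

definition lbr :: "complex mat list \<Rightarrow> complex mat list \<Rightarrow> complex mat list" where
  "lbr xs ys = map2 mbr xs ys"

definition lie_iso :: "(complex mat \<Rightarrow> complex mat list) \<Rightarrow> complex mat set \<Rightarrow> complex mat list set \<Rightarrow> bool" where
  "lie_iso f S P \<longleftrightarrow> bij_betw f S P \<and>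
     (\<forall>A\<in>S. \<forall>B\<in>S. f (A + B) = ladd (f A) (f B)) \<and>
     (\<forall>c::real. \<forall>A\<in>S. f (rsc c A) = lsc c (f A)) \<and>
     (\<forall>A\<in>S. \<forall>B\<in>S. f (mbr A B) = lbr (f A) (f B))"

definition lie_isomorphic :: "complex mat set \<Rightarrow> complex mat list set \<Rightarrow> bool" where
  "lie_isomorphic S P \<longleftrightarrow> (\<exists>f. lie_iso f S P)"

definition rlincomb :: "nat \<Rightarrow> (nat \<Rightarrow> real) \<Rightarrow> complex mat list \<Rightarrow> complex mat" where
  "rlincomb n c bs = mat n n (\<lambda>(a, b). \<Sum>i<length bs. complex_of_real (c i) * (bs ! i) $$ (a, b))"

definition real_dim_eq :: "nat \<Rightarrow> complex mat set \<Rightarrow> nat \<Rightarrow> bool" where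
  "real_dim_eq n S m \<longleftrightarrow> (\<exists>bs. length bs = m \<and> set bs \<subseteq> S \<and>
     (\<forall>c. rlincomb n c bs = 0\<^sub>m n n \<longrightarrow> (\<forall>i<m. c i = 0)) \<and>
     (\<forall>A\<in>S. \<exists>c. A = rlincomb n c bs))"

end

theory Submission
  imports Defs
begin


lemma mult_entry:
  assumes "A \<in> carrier_mat n n" "B \<in> carrier_mat n n" "i < n" "j < n"
  shows "(A * B) $$ (i, j) = (\<Sum>l<n. A $$ (i, l) * B $$ (l, j))"
  using assms by (simp add: scalar_prod_def lessThan_atLeast0)

lemma mbr_entry:
  assumes "A \<in> carrier_mat n n" "B \<in> carrier_mat n n" "i < n" "j < n"
  shows "mbr A B $$ (i, j) = (\<Sum>l<n. A $$ (i, l) * B $$ (l, j)) - (\<Sum>l<n. B $$ (i, l) * A $$ (l, j))"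
proof -
  have "mbr A B $$ (i, j) = (A*B) $$ (i,j) - (B*A) $$ (i,j)" using assms unfolding mbr_def
    by (intro index_minus_mat) auto
  then show ?thesis using mult_entry[OF assms(1,2,3,4)] mult_entry[OF assms(2,1,3,4)] by simp
qed

lemma dvd_iff_mod: "(int k dvd (int i - int j)) \<longleftrightarrow> i mod k = j mod k"
proof -
  have "i mod k = j mod k \<longleftrightarrow> int i mod int k = int j mod int k"
    by (metis of_nat_eq_iff zmod_int)
  also have "\<dots> \<longleftrightarrow> int k dvd (int i - int j)" by (rule mod_eq_dvd_iff)
  finally show ?thesis by simp
qed

lemma D_iff: "A \<in> D_alg N k \<longleftrightarrow> A \<in> u_alg N \<and> (\<forall>i<N. \<forall>j<N. i mod k \<noteq> j mod k \<longrightarrow> A $$ (i, j) = 0)"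
  unfolding D_alg_def by (simp add: dvd_iff_mod)

lemma uC: "A \<in> u_alg n \<Longrightarrow> A \<in> carrier_mat n n" unfolding u_alg_def by blast
lemma uE: "A \<in> u_alg n \<Longrightarrow> i < n \<Longrightarrow> j < n \<Longrightarrow> A $$ (i, j) = - cnj (A $$ (j, i))"
  unfolding u_alg_def by blast
lemma uI: "A \<in> carrier_mat n n \<Longrightarrow> (\<And>i j. i < n \<Longrightarrow> j < n \<Longrightarrow> A $$ (i, j) = - cnj (A $$ (j, i))) \<Longrightarrow> A \<in> u_alg n"
  unfolding u_alg_def by blast
lemma DU: "A \<in> D_alg N k \<Longrightarrow> A \<in> u_alg N" unfolding D_alg_def by blast
lemma DC: "A \<in> D_alg N k \<Longrightarrow> A \<in> carrier_mat N N" unfolding D_alg_def u_alg_def by blast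
lemma DZ: "A \<in> D_alg N k \<Longrightarrow> i < N \<Longrightarrow> j < N \<Longrightarrow> i mod k \<noteq> j mod k \<Longrightarrow> A $$ (i, j) = 0"
  unfolding D_iff by blast
lemma DI: "A \<in> u_alg N \<Longrightarrow> (\<And>i j. i < N \<Longrightarrow> j < N \<Longrightarrow> i mod k \<noteq> j mod k \<Longrightarrow> A $$ (i, j) = 0) \<Longrightarrow> A \<in> D_alg N k"
  unfolding D_iff by blast

lemma mbr_carrier: "A \<in> carrier_mat n n \<Longrightarrow> B \<in> carrier_mat n n \<Longrightarrow> mbr A B \<in> carrier_mat n n"
  unfolding mbr_def by (intro minus_carrier_mat mult_carrier_mat) 

lemma u_add: assumes A: "A \<in> u_alg n" and B: "B \<in> u_alg n" shows "A + B \<in> u_alg n"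
proof (rule uI)
  show "A + B \<in> carrier_mat n n" using uC[OF B] by (rule add_carrier_mat)
  fix i j assume ij: "i < n" "j < n"
  have cB: "dim_row B = n" "dim_col B = n" using uC[OF B] by auto
  have "(A + B) $$ (i, j) = A $$ (i, j) + B $$ (i, j)" using ij cB by simp
  also have "\<dots> = - cnj (A $$ (j, i)) + - cnj (B $$ (j, i))" using uE[OF A ij] uE[OF B ij] by simp
  also have "\<dots> = - cnj ((A + B) $$ (j, i))" using ij cB by simp
  finally show "(A + B) $$ (i, j) = - cnj ((A + B) $$ (j, i))" .
qed

lemma u_rsc: assumes A: "A \<in> u_alg n" shows "rsc c A \<in> u_alg n"
proof (rule uI)
  show "rsc c A \<in> carrier_mat n n" using uC[OF A] unfolding rsc_def by (rule smult_carrier_mat)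
  fix i j assume ij: "i < n" "j < n"
  have cA: "dim_row A = n" "dim_col A = n" using uC[OF A] by auto
  have "rsc c A $$ (i, j) = of_real c * A $$ (i, j)" using ij cA unfolding rsc_def by simp
  also have "\<dots> = of_real c * - cnj (A $$ (j, i))" using uE[OF A ij] by simp
  also have "\<dots> = - cnj (rsc c A $$ (j, i))" using ij cA unfolding rsc_def by simp
  finally show "rsc c A $$ (i, j) = - cnj (rsc c A $$ (j, i))" .
qed

lemma u_mbr: assumes A: "A \<in> u_alg n" and B: "B \<in> u_alg n" shows "mbr A B \<in> u_alg n"
proof (rule uI)
  have cA: "A \<in> carrier_mat n n" and cB: "B \<in> carrier_mat n n" using uC A B by auto
  show "mbr A B \<in> carrier_mat n n" using cA cB by (rule mbr_carrier)
  fix i j assume ij: "i < n" "j < n"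
  have e1: "(\<Sum>l<n. A $$ (i, l) * B $$ (l, j)) = (\<Sum>l<n. cnj (B $$ (j, l) * A $$ (l, i)))"
  proof (rule sum.cong)
    fix l assume "l \<in> {..<n}" then have l: "l < n" by simp
    show "A $$ (i, l) * B $$ (l, j) = cnj (B $$ (j, l) * A $$ (l, i))"
      using uE[OF A ij(1) l] uE[OF B l ij(2)] by simp
  qed simp
  have e2: "(\<Sum>l<n. B $$ (i, l) * A $$ (l, j)) = (\<Sum>l<n. cnj (A $$ (j, l) * B $$ (l, i)))"
  proof (rule sum.cong)
    fix l assume "l \<in> {..<n}" then have l: "l < n" by simp
    show "B $$ (i, l) * A $$ (l, j) = cnj (A $$ (j, l) * B $$ (l, i))"
      using uE[OF B ij(1) l] uE[OF A l ij(2)] by simp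
  qed simp
  have "mbr A B $$ (i, j) = (\<Sum>l<n. cnj (B $$ (j, l) * A $$ (l, i))) - (\<Sum>l<n. cnj (A $$ (j, l) * B $$ (l, i)))"
    using mbr_entry[OF cA cB ij] e1 e2 by simp
  also have "\<dots> = - cnj (mbr A B $$ (j, i))"
    using mbr_entry[OF cA cB ij(2) ij(1)] by (simp add: cnj_sum)
  finally show "mbr A B $$ (i, j) = - cnj (mbr A B $$ (j, i))" .
qed

lemma D_closed: "real_lie_subalg_u (D_alg N k) N"
  unfolding real_lie_subalg_u_def
proof (intro conjI ballI allI)
  show "D_alg N k \<subseteq> u_alg N" using DU by blast
  show "0\<^sub>m N N \<in> D_alg N k"
    by (rule DI, rule uI, simp_all)
  fix A B assume A: "A \<in> D_alg N k" and B: "B \<in> D_alg N k"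
  have cA: "A \<in> carrier_mat N N" and cB: "B \<in> carrier_mat N N" using A B DC by blast+
  show "A + B \<in> D_alg N k"
  proof (rule DI)
    show "A + B \<in> u_alg N" using A B u_add DU by blast
    fix i j assume ij: "i < N" "j < N" "i mod k \<noteq> j mod k"
    have "A $$ (i, j) = 0" "B $$ (i, j) = 0" using DZ[OF A ij] DZ[OF B ij] by auto
    then show "(A + B) $$ (i, j) = 0" using cA cB ij by simp
  qed
  show "mbr A B \<in> D_alg N k"
  proof (rule DI)
    show "mbr A B \<in> u_alg N" using A B u_mbr DU by blast
    fix i j assume ij: "i < N" "j < N" "i mod k \<noteq> j mod k"
    have "A $$ (i, l) * B $$ (l, j) = 0" if l: "l < N" for l
    proof (cases "i mod k = l mod k")
      case True
      then have "l mod k \<noteq> j mod k" using ij(3) by simp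
      then show ?thesis using DZ[OF B l ij(2)] by simp
    next
      case False
      then show ?thesis using DZ[OF A ij(1) l] by simp
    qed
    then have s1: "(\<Sum>l<N. A $$ (i, l) * B $$ (l, j)) = 0" by (intro sum.neutral) auto
    have "B $$ (i, l) * A $$ (l, j) = 0" if l: "l < N" for l
    proof (cases "i mod k = l mod k")
      case True
      then have "l mod k \<noteq> j mod k" using ij(3) by simp
      then show ?thesis using DZ[OF A l ij(2)] by simp
    next
      case False
      then show ?thesis using DZ[OF B ij(1) l] by simp
    qed
    then have s2: "(\<Sum>l<N. B $$ (i, l) * A $$ (l, j)) = 0" by (intro sum.neutral) auto
    show "mbr A B $$ (i, j) = 0" using mbr_entry[OF cA cB ij(1,2)] s1 s2 by simp
  qed
next
  fix c A assume A: "A \<in> D_alg N k"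
  have cA: "A \<in> carrier_mat N N" using A DC by blast
  show "rsc c A \<in> D_alg N k"
  proof (rule DI)
    show "rsc c A \<in> u_alg N" using A u_rsc DU by blast
    fix i j assume ij: "i < N" "j < N" "i mod k \<noteq> j mod k"
    have "A $$ (i, j) = 0" using DZ[OF A ij] .
    then show "rsc c A $$ (i, j) = 0" using cA ij unfolding rsc_def by simp
  qed
qed




definition bsz :: "nat \<Rightarrow> nat \<Rightarrow> nat \<Rightarrow> nat" where
  "bsz N k c = (if c < N mod k then N div k + 1 else N div k)"

definition blk :: "nat \<Rightarrow> nat \<Rightarrow> nat \<Rightarrow> complex mat \<Rightarrow> complex mat" where
  "blk N k c A = mat (bsz N k c) (bsz N k c) (\<lambda>(a, b). A $$ (c + k * a, c + k * b))"

definition fD :: "nat \<Rightarrow> nat \<Rightarrow> complex mat \<Rightarrow> complex mat list" where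
  "fD N k A = map (\<lambda>t. blk N k ((t + N mod k) mod k) A) [0..<k]"

definition idx :: "nat \<Rightarrow> nat \<Rightarrow> nat \<Rightarrow> nat" where
  "idx N k c = (c + k - N mod k) mod k"

definition gD :: "nat \<Rightarrow> nat \<Rightarrow> complex mat list \<Rightarrow> complex mat" where
  "gD N k xs = mat N N (\<lambda>(i, j). if i mod k = j mod k then xs ! idx N k (i mod k) $$ (i div k, j div k) else 0)"

definition nsz :: "nat \<Rightarrow> nat \<Rightarrow> nat list" where
  "nsz N k = replicate (k - N mod k) (N div k) @ replicate (N mod k) (N div k + 1)"

lemma key:
  assumes k: "0 < k" and c: "c < k"
  shows "c + k * m < N \<longleftrightarrow> m < bsz N k c"
proof -
  define d where "d = N div k"
  define r where "r = N mod k"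
  have N: "N = k * d + r" unfolding d_def r_def by simp
  have r: "r < k" unfolding r_def using k by simp
  show ?thesis
  proof (cases "c < r")
    case True
    then have b: "bsz N k c = d + 1" unfolding bsz_def d_def r_def by simp
    show ?thesis
    proof
      assume h: "c + k * m < N"
      show "m < bsz N k c"
      proof (rule ccontr)
        assume "\<not> m < bsz N k c"
        then have "d + 1 \<le> m" using b by simp
        then have "k * (d + 1) \<le> k * m" by (rule mult_le_mono2)
        then show False using h N r by (simp add: algebra_simps)
      qed
    next
      assume "m < bsz N k c"
      then have "m \<le> d" using b by simp
      then have "k * m \<le> k * d" by (rule mult_le_mono2)
      then show "c + k * m < N" using N True by linarith
    qed
  next
    case False
    then have b: "bsz N k c = d" unfolding bsz_def d_def r_def by simp
    show ?thesis
    proof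
      assume h: "c + k * m < N"
      show "m < bsz N k c"
      proof (rule ccontr)
        assume "\<not> m < bsz N k c"
        then have "d \<le> m" using b by simp
        then have "k * d \<le> k * m" by (rule mult_le_mono2)
        then show False using h N False by linarith
      qed
    next
      assume "m < bsz N k c"
      then have "m + 1 \<le> d" using b by simp
      then have "k * (m + 1) \<le> k * d" by (rule mult_le_mono2)
      then show "c + k * m < N" using N c by (simp add: algebra_simps)
    qed
  qed
qed

lemma key_div: assumes "0 < k" "i < N" shows "i div k < bsz N k (i mod k)"
proof -
  have "i mod k + k * (i div k) < N" using assms by simp
  then show ?thesis using key[of k "i mod k" "i div k" N] assms by simp
qed

lemma modk: "(c::nat) < k \<Longrightarrow> (c + k * m) mod k = c" by simp
lemma divk: "(c::nat) < k \<Longrightarrow> (c + k * m) div k = m" by simp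

lemma idx1: assumes "0 < k" "t < k" shows "idx N k ((t + N mod k) mod k) = t"
proof -
  have r: "N mod k < k" using assms by simp
  show ?thesis
  proof (cases "t + N mod k < k")
    case True
    then show ?thesis unfolding idx_def using assms by simp
  next
    case False
    moreover have "t + N mod k - k < k" using r assms by linarith
    ultimately have "(t + N mod k) mod k = t + N mod k - k"
      by (simp add: le_mod_geq)
    moreover have "t + N mod k - k + k - N mod k = t" using False by simp
    ultimately show ?thesis unfolding idx_def using assms by simp
  qed
qed

lemma idx2: assumes "0 < k" "c < k" shows "(idx N k c + N mod k) mod k = c" "idx N k c < k"
proof -
  have r: "N mod k < k" using assms by simp
  show "idx N k c < k" unfolding idx_def using assms by simp
  show "(idx N k c + N mod k) mod k = c"
  proof (cases "N mod k \<le> c")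
    case True
    then have e: "c + k - N mod k = (c - N mod k) + k" using r by linarith
    have "c - N mod k < k" using assms by linarith
    then have "idx N k c = c - N mod k" unfolding idx_def e by simp
    then show ?thesis using True assms by simp
  next
    case False
    then have "idx N k c = c + k - N mod k" unfolding idx_def using assms r by simp
    moreover have "c + k - N mod k + N mod k = c + k" using r by linarith
    ultimately show ?thesis using assms by simp
  qed
qed

lemma nsz_len: "length (nsz N k) = k" if "0 < k"
  unfolding nsz_def using that by simp

lemma nsz_nth: assumes "0 < k" "t < k" shows "nsz N k ! t = bsz N k ((t + N mod k) mod k)"
proof -
  have r: "N mod k < k" using assms by simp
  show ?thesis
  proof (cases "t < k - N mod k")
    case True
    then show ?thesis unfolding nsz_def bsz_def using assms by (simp add: nth_append)
  next
    case False
    moreover have "t + N mod k - k < k" using r assms by linarith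
    ultimately have "(t + N mod k) mod k = t + N mod k - k"
      by (simp add: le_mod_geq)
    then show ?thesis unfolding nsz_def bsz_def using assms False by (simp add: nth_append)
  qed
qed




lemma blk_dims: "dim_row (blk N k c A) = bsz N k c" "dim_col (blk N k c A) = bsz N k c"
  "blk N k c A \<in> carrier_mat (bsz N k c) (bsz N k c)"
  unfolding blk_def by auto

lemma blk_idx: "a < bsz N k c \<Longrightarrow> b < bsz N k c \<Longrightarrow> blk N k c A $$ (a, b) = A $$ (c + k * a, c + k * b)"
  unfolding blk_def by simp

lemma blk_u: assumes k: "0 < k" and c: "c < k" and A: "A \<in> u_alg N"
  shows "blk N k c A \<in> u_alg (bsz N k c)"
proof (rule uI)
  show "blk N k c A \<in> carrier_mat (bsz N k c) (bsz N k c)" by (rule blk_dims)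
  fix a b assume ab: "a < bsz N k c" "b < bsz N k c"
  have a: "c + k * a < N" and b: "c + k * b < N" using key[OF k c] ab by auto
  show "blk N k c A $$ (a, b) = - cnj (blk N k c A $$ (b, a))"
    using blk_idx[OF ab] blk_idx[OF ab(2) ab(1)] uE[OF A a b] by simp
qed

lemma fD_len: "length (fD N k A) = k" unfolding fD_def by simp
lemma fD_nth: "t < k \<Longrightarrow> fD N k A ! t = blk N k ((t + N mod k) mod k) A" unfolding fD_def by simp

lemma dsum_u: "xs \<in> dsum (map u_alg (nsz N k)) \<longleftrightarrow> length xs = k \<and> (\<forall>t<k. xs ! t \<in> u_alg (nsz N k ! t))"
  if "0 < k" unfolding dsum_def using nsz_len[OF that] by auto

lemma fD_in: assumes k: "0 < k" and A: "A \<in> D_alg N k" shows "fD N k A \<in> dsum (map u_alg (nsz N k))"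
  unfolding dsum_u[OF k]
proof (intro conjI allI impI)
  show "length (fD N k A) = k" by (rule fD_len)
  fix t assume t: "t < k"
  have c: "(t + N mod k) mod k < k" using k by simp
  show "fD N k A ! t \<in> u_alg (nsz N k ! t)"
    unfolding fD_nth[OF t] nsz_nth[OF k t] using blk_u[OF k c DU[OF A]] .
qed

lemma gD_idx: "i < N \<Longrightarrow> j < N \<Longrightarrow> gD N k xs $$ (i, j) =
   (if i mod k = j mod k then xs ! idx N k (i mod k) $$ (i div k, j div k) else 0)"
  unfolding gD_def by simp

lemma gD_carrier: "gD N k xs \<in> carrier_mat N N" unfolding gD_def by simp

lemma nsz_idx: assumes k: "0 < k" and c: "c < k" shows "nsz N k ! idx N k c = bsz N k c"
  using nsz_nth[OF k idx2(2)[OF k c]] idx2(1)[OF k c] by simp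

lemma gD_in: assumes k: "0 < k" and xs: "xs \<in> dsum (map u_alg (nsz N k))" shows "gD N k xs \<in> D_alg N k"
proof (rule DI)
  have len: "length xs = k" and xu: "\<And>t. t < k \<Longrightarrow> xs ! t \<in> u_alg (nsz N k ! t)"
    using xs unfolding dsum_u[OF k] by auto
  show "gD N k xs \<in> u_alg N"
  proof (rule uI)
    show "gD N k xs \<in> carrier_mat N N" by (rule gD_carrier)
    fix i j assume ij: "i < N" "j < N"
    show "gD N k xs $$ (i, j) = - cnj (gD N k xs $$ (j, i))"
    proof (cases "i mod k = j mod k")
      case True
      define c where "c = i mod k"
      have c: "c < k" unfolding c_def using k by simp
      have X: "xs ! idx N k c \<in> u_alg (bsz N k c)" using xu[OF idx2(2)[where N=N, OF k c]] nsz_idx[where N=N, OF k c] by simp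
      have a: "i div k < bsz N k c" using key_div[OF k ij(1)] unfolding c_def .
      have b: "j div k < bsz N k c" using key_div[OF k ij(2)] True unfolding c_def by simp
      show ?thesis using gD_idx[OF ij] gD_idx[OF ij(2) ij(1)] True uE[OF X a b] unfolding c_def by simp
    next
      case False
      then show ?thesis using gD_idx[OF ij] gD_idx[OF ij(2) ij(1)] by simp
    qed
  qed
  fix i j assume "i < N" "j < N" "i mod k \<noteq> j mod k"
  then show "gD N k xs $$ (i, j) = 0" using gD_idx by simp
qed

lemma gf: assumes k: "0 < k" and A: "A \<in> D_alg N k" shows "gD N k (fD N k A) = A"
proof (rule eq_matI)
  have cA: "A \<in> carrier_mat N N" using DC[OF A] .
  show "dim_row (gD N k (fD N k A)) = dim_row A" "dim_col (gD N k (fD N k A)) = dim_col A"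
    using cA gD_carrier by auto
  fix i j assume "i < dim_row A" "j < dim_col A"
  then have ij: "i < N" "j < N" using cA by auto
  show "gD N k (fD N k A) $$ (i, j) = A $$ (i, j)"
  proof (cases "i mod k = j mod k")
    case True
    define c where "c = i mod k"
    have c: "c < k" unfolding c_def using k by simp
    have F: "fD N k A ! idx N k c = blk N k c A"
      using fD_nth[OF idx2(2)[OF k c]] idx2(1)[OF k c] by simp
    have a: "i div k < bsz N k c" using key_div[OF k ij(1)] unfolding c_def .
    have b: "j div k < bsz N k c" using key_div[OF k ij(2)] True unfolding c_def by simp
    have "gD N k (fD N k A) $$ (i, j) = blk N k c A $$ (i div k, j div k)"
      using gD_idx[OF ij] True F unfolding c_def by simp
    also have "\<dots> = A $$ (c + k * (i div k), c + k * (j div k))" by (rule blk_idx[OF a b])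
    also have "\<dots> = A $$ (i, j)" unfolding c_def using True mod_mult_div_eq[of i k] mod_mult_div_eq[of j k] by simp
    finally show ?thesis .
  next
    case False
    then show ?thesis using gD_idx[OF ij] DZ[OF A ij] by simp
  qed
qed

lemma fg: assumes k: "0 < k" and xs: "xs \<in> dsum (map u_alg (nsz N k))" shows "fD N k (gD N k xs) = xs"
proof (rule nth_equalityI)
  have len: "length xs = k" and xu: "\<And>t. t < k \<Longrightarrow> xs ! t \<in> u_alg (nsz N k ! t)"
    using xs unfolding dsum_u[OF k] by auto
  show "length (fD N k (gD N k xs)) = length xs" using len fD_len by simp
  fix t assume "t < length (fD N k (gD N k xs))"
  then have t: "t < k" using fD_len by simp
  define c where "c = (t + N mod k) mod k"
  have c: "c < k" unfolding c_def using k by simp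
  have it: "idx N k c = t" unfolding c_def using idx1[OF k t] .
  have X: "xs ! t \<in> carrier_mat (bsz N k c) (bsz N k c)"
    using uC[OF xu[OF t]] nsz_nth[OF k t] unfolding c_def by simp
  show "fD N k (gD N k xs) ! t = xs ! t"
    unfolding fD_nth[OF t] c_def[symmetric]
  proof (rule eq_matI)
    show "dim_row (blk N k c (gD N k xs)) = dim_row (xs ! t)"
      "dim_col (blk N k c (gD N k xs)) = dim_col (xs ! t)" using X blk_dims by auto
    fix a b assume "a < dim_row (xs ! t)" "b < dim_col (xs ! t)"
    then have ab: "a < bsz N k c" "b < bsz N k c" using X by auto
    have a: "c + k * a < N" and b: "c + k * b < N" using key[OF k c] ab by auto
    show "blk N k c (gD N k xs) $$ (a, b) = xs ! t $$ (a, b)"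
      using blk_idx[OF ab] gD_idx[OF a b] c it by simp
  qed
qed

lemma sum_block:
  fixes f :: "nat \<Rightarrow> complex"
  assumes k: "0 < k" and c: "c < k" and z: "\<And>l. l < N \<Longrightarrow> l mod k \<noteq> c \<Longrightarrow> f l = 0"
  shows "(\<Sum>l<N. f l) = (\<Sum>m<bsz N k c. f (c + k * m))"
proof -
  have S: "{l. l < N \<and> l mod k = c} = (\<lambda>m. c + k * m) ` {..<bsz N k c}"
  proof (intro equalityI subsetI)
    fix l assume "l \<in> {l. l < N \<and> l mod k = c}"
    then have l: "l < N" "l mod k = c" by auto
    have "l = c + k * (l div k)" using l(2) mod_mult_div_eq[of l k] by simp
    moreover have "l div k < bsz N k c" using key_div[OF k l(1)] l(2) by simp
    ultimately show "l \<in> (\<lambda>m. c + k * m) ` {..<bsz N k c}" by blast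
  next
    fix l assume "l \<in> (\<lambda>m. c + k * m) ` {..<bsz N k c}"
    then obtain m where m: "m < bsz N k c" "l = c + k * m" by auto
    then show "l \<in> {l. l < N \<and> l mod k = c}" using key[OF k c] c by simp
  qed
  have inj: "inj_on (\<lambda>m. c + k * m) {..<bsz N k c}" using k by (auto simp: inj_on_def)
  have "(\<Sum>l<N. f l) = (\<Sum>l\<in>{l. l < N \<and> l mod k = c}. f l)"
    by (rule sum.mono_neutral_right) (auto intro: z)
  also have "\<dots> = (\<Sum>m<bsz N k c. f (c + k * m))"
    unfolding S by (rule sum.reindex[OF inj, unfolded comp_def])
  finally show ?thesis .
qed

lemma blk_add: assumes k: "0 < k" and c: "c < k" and A: "A \<in> carrier_mat N N" and B: "B \<in> carrier_mat N N"
  shows "blk N k c (A + B) = blk N k c A + blk N k c B"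
proof (rule eq_matI)
  show "dim_row (blk N k c (A + B)) = dim_row (blk N k c A + blk N k c B)"
    "dim_col (blk N k c (A + B)) = dim_col (blk N k c A + blk N k c B)" by (simp_all add: blk_dims)
  fix a b assume "a < dim_row (blk N k c A + blk N k c B)" "b < dim_col (blk N k c A + blk N k c B)"
  then have ab: "a < bsz N k c" "b < bsz N k c" by (simp_all add: blk_dims)
  have a: "c + k * a < N" and b: "c + k * b < N" using key[OF k c] ab by auto
  show "blk N k c (A + B) $$ (a, b) = (blk N k c A + blk N k c B) $$ (a, b)"
    using ab a b A B by (simp add: blk_idx blk_dims)
qed

lemma blk_rsc: assumes k: "0 < k" and c: "c < k" and A: "A \<in> carrier_mat N N"
  shows "blk N k c (rsc s A) = rsc s (blk N k c A)"
proof (rule eq_matI)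
  show "dim_row (blk N k c (rsc s A)) = dim_row (rsc s (blk N k c A))"
    "dim_col (blk N k c (rsc s A)) = dim_col (rsc s (blk N k c A))" by (simp_all add: blk_dims rsc_def)
  fix a b assume "a < dim_row (rsc s (blk N k c A))" "b < dim_col (rsc s (blk N k c A))"
  then have ab: "a < bsz N k c" "b < bsz N k c" by (simp_all add: blk_dims rsc_def)
  have a: "c + k * a < N" and b: "c + k * b < N" using key[OF k c] ab by auto
  show "blk N k c (rsc s A) $$ (a, b) = rsc s (blk N k c A) $$ (a, b)"
    using ab a b A by (simp add: blk_idx blk_dims rsc_def)
qed

lemma blk_mbr: assumes k: "0 < k" and c: "c < k" and A: "A \<in> D_alg N k" and B: "B \<in> D_alg N k"
  shows "blk N k c (mbr A B) = mbr (blk N k c A) (blk N k c B)"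
proof (rule eq_matI)
  have cA: "A \<in> carrier_mat N N" and cB: "B \<in> carrier_mat N N" using DC A B by auto
  have bA: "blk N k c A \<in> carrier_mat (bsz N k c) (bsz N k c)" and bB: "blk N k c B \<in> carrier_mat (bsz N k c) (bsz N k c)"
    by (rule blk_dims)+
  show "dim_row (blk N k c (mbr A B)) = dim_row (mbr (blk N k c A) (blk N k c B))"
    "dim_col (blk N k c (mbr A B)) = dim_col (mbr (blk N k c A) (blk N k c B))"
    using mbr_carrier[OF bA bB] by (simp_all add: blk_dims)
  fix a b assume "a < dim_row (mbr (blk N k c A) (blk N k c B))" "b < dim_col (mbr (blk N k c A) (blk N k c B))"
  then have ab: "a < bsz N k c" "b < bsz N k c" using mbr_carrier[OF bA bB] by auto
  have a: "c + k * a < N" and b: "c + k * b < N" using key[OF k c] ab by auto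
  have ma: "(c + k * a) mod k = c" and mb: "(c + k * b) mod k = c" using c by simp_all
  have s1: "(\<Sum>l<N. A $$ (c + k * a, l) * B $$ (l, c + k * b)) =
        (\<Sum>m<bsz N k c. A $$ (c + k * a, c + k * m) * B $$ (c + k * m, c + k * b))"
    by (rule sum_block[OF k c]) (use DZ[OF A a] ma in simp)
  have s2: "(\<Sum>l<N. B $$ (c + k * a, l) * A $$ (l, c + k * b)) =
        (\<Sum>m<bsz N k c. B $$ (c + k * a, c + k * m) * A $$ (c + k * m, c + k * b))"
    by (rule sum_block[OF k c]) (use DZ[OF B a] ma in simp)
  have s3: "(\<Sum>m<bsz N k c. blk N k c A $$ (a, m) * blk N k c B $$ (m, b)) =
        (\<Sum>m<bsz N k c. A $$ (c + k * a, c + k * m) * B $$ (c + k * m, c + k * b))"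
    by (rule sum.cong) (simp_all add: blk_idx ab)
  have s4: "(\<Sum>m<bsz N k c. blk N k c B $$ (a, m) * blk N k c A $$ (m, b)) =
        (\<Sum>m<bsz N k c. B $$ (c + k * a, c + k * m) * A $$ (c + k * m, c + k * b))"
    by (rule sum.cong) (simp_all add: blk_idx ab)
  show "blk N k c (mbr A B) $$ (a, b) = mbr (blk N k c A) (blk N k c B) $$ (a, b)"
    using blk_idx[OF ab, of "mbr A B"] mbr_entry[OF cA cB a b] mbr_entry[OF bA bB ab] s1 s2 s3 s4 by simp
qed

lemma fD_add: assumes k: "0 < k" and A: "A \<in> carrier_mat N N" and B: "B \<in> carrier_mat N N"
  shows "fD N k (A + B) = ladd (fD N k A) (fD N k B)"
  by (rule nth_equalityI) (simp_all add: ladd_def fD_len fD_nth blk_add[OF k _ A B] k)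

lemma fD_rsc: assumes k: "0 < k" and A: "A \<in> carrier_mat N N"
  shows "fD N k (rsc s A) = lsc s (fD N k A)"
  by (rule nth_equalityI) (simp_all add: lsc_def fD_len fD_nth blk_rsc[OF k _ A] k)

lemma fD_mbr: assumes k: "0 < k" and A: "A \<in> D_alg N k" and B: "B \<in> D_alg N k"
  shows "fD N k (mbr A B) = lbr (fD N k A) (fD N k B)"
  by (rule nth_equalityI) (simp_all add: lbr_def fD_len fD_nth blk_mbr[OF k _ A B] k)

lemma iso1: assumes k: "0 < k"
  shows "lie_iso (fD N k) (D_alg N k) (dsum (map u_alg (nsz N k)))"
  unfolding lie_iso_def
proof (intro conjI ballI allI)
  show "bij_betw (fD N k) (D_alg N k) (dsum (map u_alg (nsz N k)))"
    by (rule bij_betw_byWitness[where f' = "gD N k"]) (auto simp: gf fg fD_in gD_in k)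
  fix A B assume A: "A \<in> D_alg N k" and B: "B \<in> D_alg N k"
  show "fD N k (A + B) = ladd (fD N k A) (fD N k B)" using fD_add[OF k DC[OF A] DC[OF B]] .
  show "fD N k (mbr A B) = lbr (fD N k A) (fD N k B)" using fD_mbr[OF k A B] .
next
  fix s A assume A: "A \<in> D_alg N k"
  show "fD N k (rsc s A) = lsc s (fD N k A)" using fD_rsc[OF k DC[OF A]] .
qed




definition tr :: "complex mat \<Rightarrow> complex" where
  "tr X = (\<Sum>i<dim_row X. X $$ (i, i))"

definition spl :: "complex mat \<Rightarrow> complex mat" where
  "spl X = X + (- (tr X / of_nat (dim_row X))) \<cdot>\<^sub>m 1\<^sub>m (dim_row X)"

definition tr1 :: "complex mat \<Rightarrow> complex mat" where
  "tr1 X = mat 1 1 (\<lambda>_. tr X)"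

definition shf :: "complex mat \<Rightarrow> complex mat \<Rightarrow> complex mat" where
  "shf S t = S + (t $$ (0, 0) / of_nat (dim_row S)) \<cdot>\<^sub>m 1\<^sub>m (dim_row S)"

lemma sc_idx: "(X :: complex mat) \<in> carrier_mat n n \<Longrightarrow> i < n \<Longrightarrow> j < n \<Longrightarrow>
   (X + a \<cdot>\<^sub>m 1\<^sub>m n) $$ (i, j) = X $$ (i, j) + (if i = j then a else 0)"
  by simp

lemma sc_carrier: "X \<in> carrier_mat n n \<Longrightarrow> X + a \<cdot>\<^sub>m 1\<^sub>m n \<in> carrier_mat n n"
  by simp

lemma tr_sc: assumes "X \<in> carrier_mat n n" shows "tr (X + a \<cdot>\<^sub>m 1\<^sub>m n) = tr X + of_nat n * a"
proof -
  have "tr (X + a \<cdot>\<^sub>m 1\<^sub>m n) = (\<Sum>i<n. X $$ (i, i) + a)"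
    unfolding tr_def using assms by (intro sum.cong) auto
  also have "\<dots> = tr X + of_nat n * a" unfolding tr_def using assms by (simp add: sum.distrib)
  finally show ?thesis .
qed

lemma tr_add: "X \<in> carrier_mat n n \<Longrightarrow> Y \<in> carrier_mat n n \<Longrightarrow> tr (X + Y) = tr X + tr Y"
  unfolding tr_def by (simp add: sum.distrib)

lemma tr_rsc: "X \<in> carrier_mat n n \<Longrightarrow> tr (rsc c X) = of_real c * tr X"
  unfolding tr_def rsc_def by (simp add: sum_distrib_left)

lemma tr_mbr: assumes X: "X \<in> carrier_mat n n" and Y: "Y \<in> carrier_mat n n" shows "tr (mbr X Y) = 0"
proof -
  have "tr (mbr X Y) = (\<Sum>i<n. (\<Sum>l<n. X $$ (i, l) * Y $$ (l, i)) - (\<Sum>l<n. Y $$ (i, l) * X $$ (l, i)))"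
    unfolding tr_def using mbr_carrier[OF X Y] by (intro sum.cong) (auto simp: mbr_entry[OF X Y])
  also have "\<dots> = (\<Sum>i<n. \<Sum>l<n. X $$ (i, l) * Y $$ (l, i)) - (\<Sum>i<n. \<Sum>l<n. Y $$ (i, l) * X $$ (l, i))"
    by (simp add: sum_subtractf)
  also have "(\<Sum>i<n. \<Sum>l<n. Y $$ (i, l) * X $$ (l, i)) = (\<Sum>i<n. \<Sum>l<n. X $$ (i, l) * Y $$ (l, i))"
    by (subst sum.swap) (simp add: mult.commute)
  finally show ?thesis by simp
qed

lemma mbr_sc: assumes X: "X \<in> carrier_mat n n" and Y: "Y \<in> carrier_mat n n"
  shows "mbr (X + a \<cdot>\<^sub>m 1\<^sub>m n) (Y + b \<cdot>\<^sub>m 1\<^sub>m n) = mbr X Y"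
proof -
  have o: "1\<^sub>m n \<in> carrier_mat n n" by simp
  have aI: "a \<cdot>\<^sub>m 1\<^sub>m n \<in> carrier_mat n n" and bI: "b \<cdot>\<^sub>m 1\<^sub>m n \<in> carrier_mat n n" by simp_all
  have P: "(U + c \<cdot>\<^sub>m 1\<^sub>m n) * (V + e \<cdot>\<^sub>m 1\<^sub>m n) = (U * V + e \<cdot>\<^sub>m U) + (c \<cdot>\<^sub>m V + c \<cdot>\<^sub>m (e \<cdot>\<^sub>m 1\<^sub>m n))"
    if U: "U \<in> carrier_mat n n" and V: "V \<in> carrier_mat n n" for U V :: "complex mat" and c e
  proof -
    have "(U + c \<cdot>\<^sub>m 1\<^sub>m n) * (V + e \<cdot>\<^sub>m 1\<^sub>m n) = U * (V + e \<cdot>\<^sub>m 1\<^sub>m n) + (c \<cdot>\<^sub>m 1\<^sub>m n) * (V + e \<cdot>\<^sub>m 1\<^sub>m n)"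
      using U V by (intro add_mult_distrib_mat[of _ n n]) auto
    also have "U * (V + e \<cdot>\<^sub>m 1\<^sub>m n) = U * V + U * (e \<cdot>\<^sub>m 1\<^sub>m n)"
      using U V by (intro mult_add_distrib_mat[of _ n n]) auto
    also have "U * (e \<cdot>\<^sub>m 1\<^sub>m n) = e \<cdot>\<^sub>m U"
      using mult_smult_distrib[OF U o, of e] right_mult_one_mat[OF U] by simp
    also have "(c \<cdot>\<^sub>m 1\<^sub>m n) * (V + e \<cdot>\<^sub>m 1\<^sub>m n) = (c \<cdot>\<^sub>m 1\<^sub>m n) * V + (c \<cdot>\<^sub>m 1\<^sub>m n) * (e \<cdot>\<^sub>m 1\<^sub>m n)"
      using U V by (intro mult_add_distrib_mat[of _ n n]) auto
    also have "(c \<cdot>\<^sub>m 1\<^sub>m n) * V = c \<cdot>\<^sub>m V"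
      using mult_smult_assoc_mat[OF o V, of c] left_mult_one_mat[OF V] by simp
    also have "(c \<cdot>\<^sub>m 1\<^sub>m n) * (e \<cdot>\<^sub>m 1\<^sub>m n) = c \<cdot>\<^sub>m (e \<cdot>\<^sub>m 1\<^sub>m n)"
      using mult_smult_assoc_mat[OF o, of "e \<cdot>\<^sub>m 1\<^sub>m n" n c] left_mult_one_mat[of "e \<cdot>\<^sub>m 1\<^sub>m n" n n] by simp
    finally show ?thesis .
  qed
  show ?thesis unfolding mbr_def P[OF X Y] P[OF Y X]
  proof (rule eq_matI)
    fix i j assume "i < dim_row (X * Y - Y * X)" "j < dim_col (X * Y - Y * X)"
    then have ij: "i < n" "j < n" using X Y by auto
    show "(X * Y + b \<cdot>\<^sub>m X + (a \<cdot>\<^sub>m Y + a \<cdot>\<^sub>m (b \<cdot>\<^sub>m 1\<^sub>m n)) - (Y * X + a \<cdot>\<^sub>m Y + (b \<cdot>\<^sub>m X + b \<cdot>\<^sub>m (a \<cdot>\<^sub>m 1\<^sub>m n)))) $$ (i, j) =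
         (X * Y - Y * X) $$ (i, j)"
      using ij X Y by simp
  qed (use X Y in auto)
qed

lemma skew_cnj: "(x::complex) = - cnj x \<Longrightarrow> cnj x = - x"
proof -
  assume e: "x = - cnj x"
  have "cnj x = cnj (- cnj x)" using e by (rule arg_cong)
  then show ?thesis by simp
qed

lemma spl_eq: "X \<in> carrier_mat n n \<Longrightarrow> spl X = X + (- (tr X / of_nat n)) \<cdot>\<^sub>m 1\<^sub>m n"
  unfolding spl_def by simp

lemma su_iff: "A \<in> su_alg n \<longleftrightarrow> A \<in> u_alg n \<and> tr A = 0"
proof -
  have "A \<in> u_alg n \<Longrightarrow> tr A = (\<Sum>i<n. A $$ (i, i))" unfolding tr_def using uC by fastforce
  then show ?thesis unfolding su_alg_def by auto
qed

lemma cnj_tr: assumes X: "X \<in> u_alg n" shows "cnj (tr X) = - tr X"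
proof -
  have d: "dim_row X = n" using uC[OF X] by simp
  have "cnj (tr X) = (\<Sum>i<n. cnj (X $$ (i, i)))" unfolding tr_def d by (simp add: cnj_sum)
  also have "\<dots> = (\<Sum>i<n. - X $$ (i, i))"
  proof (rule sum.cong)
    fix i assume "i \<in> {..<n}" then have i: "i < n" by simp
    show "cnj (X $$ (i, i)) = - X $$ (i, i)" using skew_cnj[OF uE[OF X i i]] .
  qed simp
  also have "\<dots> = - tr X" unfolding tr_def d by (simp add: sum_negf)
  finally show ?thesis .
qed

lemma spl_su: assumes X: "X \<in> u_alg n" and n: "0 < n" shows "spl X \<in> su_alg n"
  unfolding su_iff
proof
  have cX: "X \<in> carrier_mat n n" using uC[OF X] .
  show "spl X \<in> u_alg n"
  proof (rule uI)
    show "spl X \<in> carrier_mat n n" unfolding spl_eq[OF cX] using cX by simp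
    fix i j assume ij: "i < n" "j < n"
    have c: "cnj (tr X / of_nat n) = - (tr X / of_nat n)" using cnj_tr[OF X] by simp
    show "spl X $$ (i, j) = - cnj (spl X $$ (j, i))"
      unfolding spl_eq[OF cX] using sc_idx[OF cX ij] sc_idx[OF cX ij(2) ij(1)] uE[OF X ij] c by auto
  qed
  show "tr (spl X) = 0" unfolding spl_eq[OF cX] tr_sc[OF cX] using n by simp
qed

lemma tr1_u: assumes X: "X \<in> u_alg n" shows "tr1 X \<in> u_alg 1"
proof (rule uI)
  show "tr1 X \<in> carrier_mat 1 1" unfolding tr1_def by simp
  fix i j :: nat assume "i < 1" "j < 1"
  then show "tr1 X $$ (i, j) = - cnj (tr1 X $$ (j, i))" unfolding tr1_def using cnj_tr[OF X] by simp
qed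

lemma spl_add: assumes X: "X \<in> carrier_mat n n" and Y: "Y \<in> carrier_mat n n" shows "spl (X + Y) = spl X + spl Y"
proof -
  have XY: "X + Y \<in> carrier_mat n n" using Y by simp
  show ?thesis unfolding spl_eq[OF XY] spl_eq[OF X] spl_eq[OF Y] tr_add[OF X Y]
    by (rule eq_matI) (use X Y in \<open>auto simp: add_divide_distrib\<close>)
qed

lemma spl_rsc: assumes X: "X \<in> carrier_mat n n" shows "spl (rsc c X) = rsc c (spl X)"
proof -
  have cX: "rsc c X \<in> carrier_mat n n" using X unfolding rsc_def by simp
  show ?thesis unfolding spl_eq[OF cX] spl_eq[OF X] tr_rsc[OF X]
    by (rule eq_matI) (use X in \<open>auto simp: rsc_def algebra_simps\<close>)
qed

lemma spl_mbr: assumes X: "X \<in> carrier_mat n n" and Y: "Y \<in> carrier_mat n n"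
  shows "spl (mbr X Y) = mbr (spl X) (spl Y)"
proof -
  have M: "mbr X Y \<in> carrier_mat n n" using mbr_carrier[OF X Y] .
  have "spl (mbr X Y) = mbr X Y" unfolding spl_eq[OF M] tr_mbr[OF X Y]
    by (rule eq_matI) (use M in auto)
  also have "\<dots> = mbr (spl X) (spl Y)" unfolding spl_eq[OF X] spl_eq[OF Y] mbr_sc[OF X Y] ..
  finally show ?thesis .
qed

lemma tr1_add: assumes X: "X \<in> carrier_mat n n" and Y: "Y \<in> carrier_mat n n" shows "tr1 (X + Y) = tr1 X + tr1 Y"
  unfolding tr1_def tr_add[OF X Y] by (rule eq_matI) auto

lemma tr1_rsc: assumes X: "X \<in> carrier_mat n n" shows "tr1 (rsc c X) = rsc c (tr1 X)"
  unfolding tr1_def tr_rsc[OF X] by (rule eq_matI) (auto simp: rsc_def)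

lemma tr1_mbr: assumes X: "X \<in> carrier_mat n n" and Y: "Y \<in> carrier_mat n n"
  shows "tr1 (mbr X Y) = mbr (tr1 X) (tr1 Y)"
proof -
  have c1: "tr1 X \<in> carrier_mat 1 1" "tr1 Y \<in> carrier_mat 1 1" unfolding tr1_def by auto
  show ?thesis
  proof (rule eq_matI)
    show "dim_row (tr1 (mbr X Y)) = dim_row (mbr (tr1 X) (tr1 Y))"
      "dim_col (tr1 (mbr X Y)) = dim_col (mbr (tr1 X) (tr1 Y))" using mbr_carrier[OF c1] unfolding tr1_def by auto
    fix i j assume "i < dim_row (mbr (tr1 X) (tr1 Y))" "j < dim_col (mbr (tr1 X) (tr1 Y))"
    then have ij: "i < 1" "j < 1" using mbr_carrier[OF c1] by auto
    show "tr1 (mbr X Y) $$ (i, j) = mbr (tr1 X) (tr1 Y) $$ (i, j)"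
      using mbr_entry[OF c1 ij] ij tr_mbr[OF X Y] unfolding tr1_def by simp
  qed
qed

lemma shf_spl: assumes X: "X \<in> carrier_mat n n" and n: "0 < n" shows "shf (spl X) (tr1 X) = X"
proof -
  have S: "spl X \<in> carrier_mat n n" unfolding spl_eq[OF X] using X by simp
  have d: "dim_row (spl X) = n" using S by simp
  show ?thesis unfolding shf_def d unfolding spl_eq[OF X] tr1_def
    by (rule eq_matI) (use X in auto)
qed

lemma shf_u: assumes S: "S \<in> su_alg n" and t: "t \<in> u_alg 1" shows "shf S t \<in> u_alg n"
proof (rule uI)
  have Su: "S \<in> u_alg n" using S su_iff by auto
  have cS: "S \<in> carrier_mat n n" using uC[OF Su] .
  have d: "dim_row S = n" using cS by simp
  show "shf S t \<in> carrier_mat n n" unfolding shf_def d using cS by simp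
  fix i j assume ij: "i < n" "j < n"
  have c: "cnj (t $$ (0, 0) / of_nat n) = - (t $$ (0, 0) / of_nat n)" using skew_cnj[OF uE[OF t, of 0 0]] by simp
  show "shf S t $$ (i, j) = - cnj (shf S t $$ (j, i))"
    unfolding shf_def d using sc_idx[OF cS ij] sc_idx[OF cS ij(2) ij(1)] uE[OF Su ij] c by auto
qed

lemma spl_shf: assumes S: "S \<in> su_alg n" and t: "t \<in> u_alg 1" and n: "0 < n"
  shows "spl (shf S t) = S" "tr1 (shf S t) = t"
proof -
  have Su: "S \<in> u_alg n" and trS: "tr S = 0" using S su_iff by auto
  have cS: "S \<in> carrier_mat n n" using uC[OF Su] .
  have ct: "t \<in> carrier_mat 1 1" using uC[OF t] .
  have d: "dim_row S = n" using cS by simp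
  have Z: "shf S t \<in> carrier_mat n n" unfolding shf_def d using cS by simp
  have trZ: "tr (shf S t) = t $$ (0, 0)" unfolding shf_def d tr_sc[OF cS] trS using n by simp
  show "spl (shf S t) = S" unfolding spl_eq[OF Z] trZ unfolding shf_def d
    by (rule eq_matI) (use cS in auto)
  show "tr1 (shf S t) = t" unfolding tr1_def trZ
    by (rule eq_matI) (use ct in auto)
qed




definition FS :: "complex mat list \<Rightarrow> complex mat list" where
  "FS xs = map spl xs @ map tr1 xs"

definition GS :: "nat \<Rightarrow> complex mat list \<Rightarrow> complex mat list" where
  "GS m ys = map2 shf (take m ys) (drop m ys)"

lemma dsumU: "xs \<in> dsum (map u_alg ns) \<longleftrightarrow> length xs = length ns \<and> (\<forall>t<length ns. xs ! t \<in> u_alg (ns ! t))"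
  unfolding dsum_def by auto

lemma dsumT: "ys \<in> dsum (map su_alg ns @ replicate (length ns) (u_alg 1)) \<longleftrightarrow>
   length ys = 2 * length ns \<and> (\<forall>t<length ns. ys ! t \<in> su_alg (ns ! t)) \<and> (\<forall>t<length ns. ys ! (length ns + t) \<in> u_alg 1)"
  (is "?L \<longleftrightarrow> ?R")
proof
  assume L: ?L
  have len: "length ys = 2 * length ns" using L unfolding dsum_def by simp
  have all: "\<And>i. i < 2 * length ns \<Longrightarrow> ys ! i \<in> (map su_alg ns @ replicate (length ns) (u_alg 1)) ! i"
    using L unfolding dsum_def by auto
  show ?R
  proof (intro conjI allI impI)
    show "length ys = 2 * length ns" by (rule len)
    fix t assume t: "t < length ns"
    show "ys ! t \<in> su_alg (ns ! t)" using all[of t] t by (simp add: nth_append)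
    show "ys ! (length ns + t) \<in> u_alg 1" using all[of "length ns + t"] t by (simp add: nth_append)
  qed
next
  assume R: ?R
  show ?L unfolding dsum_def
  proof (intro CollectI conjI allI impI)
    show "length ys = length (map su_alg ns @ replicate (length ns) (u_alg 1))" using R by simp
    fix i assume "i < length (map su_alg ns @ replicate (length ns) (u_alg 1))"
    then have i: "i < 2 * length ns" by simp
    show "ys ! i \<in> (map su_alg ns @ replicate (length ns) (u_alg 1)) ! i"
    proof (cases "i < length ns")
      case True
      then show ?thesis using R by (simp add: nth_append)
    next
      case False
      then have e: "length ns + (i - length ns) = i" and l: "i - length ns < length ns" using i by auto
      have "ys ! i \<in> u_alg 1" using R l e by metis
      moreover have "(map su_alg ns @ replicate (length ns) (u_alg 1)) ! i = u_alg 1"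
        using False l by (simp add: nth_append)
      ultimately show ?thesis by simp
    qed
  qed
qed

lemma FS_len: "length (FS xs) = 2 * length xs" unfolding FS_def by simp

lemma FS_nth: "i < 2 * length xs \<Longrightarrow> FS xs ! i = (if i < length xs then spl (xs ! i) else tr1 (xs ! (i - length xs)))"
  unfolding FS_def by (simp add: nth_append)

lemma GS_len: "length ys = 2 * m \<Longrightarrow> length (GS m ys) = m" unfolding GS_def by simp

lemma GS_nth: "length ys = 2 * m \<Longrightarrow> t < m \<Longrightarrow> GS m ys ! t = shf (ys ! t) (ys ! (m + t))"
  unfolding GS_def by simp

context
  fixes ns :: "nat list"
  assumes pos: "\<And>n. n \<in> set ns \<Longrightarrow> 0 < n"
begin

lemma pos_nth: "t < length ns \<Longrightarrow> 0 < ns ! t" using pos nth_mem by blast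

lemma FS_in: assumes xs: "xs \<in> dsum (map u_alg ns)"
  shows "FS xs \<in> dsum (map su_alg ns @ replicate (length ns) (u_alg 1))"
proof -
  have len: "length xs = length ns" and xu: "\<And>t. t < length ns \<Longrightarrow> xs ! t \<in> u_alg (ns ! t)"
    using xs unfolding dsumU by auto
  show ?thesis unfolding dsumT
  proof (intro conjI allI impI)
    show "length (FS xs) = 2 * length ns" using len FS_len by simp
    fix t assume t: "t < length ns"
    show "FS xs ! t \<in> su_alg (ns ! t)" using FS_nth[of t xs] t len spl_su[OF xu[OF t] pos_nth[OF t]] by simp
    show "FS xs ! (length ns + t) \<in> u_alg 1" using FS_nth[of "length ns + t" xs] t len tr1_u[OF xu[OF t]] by simp
  qed
qed

lemma GS_in: assumes ys: "ys \<in> dsum (map su_alg ns @ replicate (length ns) (u_alg 1))"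
  shows "GS (length ns) ys \<in> dsum (map u_alg ns)"
proof -
  have len: "length ys = 2 * length ns" and a: "\<And>t. t < length ns \<Longrightarrow> ys ! t \<in> su_alg (ns ! t)"
    and b: "\<And>t. t < length ns \<Longrightarrow> ys ! (length ns + t) \<in> u_alg 1"
    using ys unfolding dsumT by auto
  show ?thesis unfolding dsumU
  proof (intro conjI allI impI)
    show "length (GS (length ns) ys) = length ns" using GS_len[OF len] .
    fix t assume t: "t < length ns"
    show "GS (length ns) ys ! t \<in> u_alg (ns ! t)" unfolding GS_nth[OF len t] using shf_u[OF a[OF t] b[OF t]] .
  qed
qed

lemma GS_FS: assumes xs: "xs \<in> dsum (map u_alg ns)" shows "GS (length ns) (FS xs) = xs"
proof -
  have len: "length xs = length ns" and xu: "\<And>t. t < length ns \<Longrightarrow> xs ! t \<in> u_alg (ns ! t)"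
    using xs unfolding dsumU by auto
  have l2: "length (FS xs) = 2 * length ns" using FS_len len by simp
  show ?thesis
  proof (rule nth_equalityI)
    show "length (GS (length ns) (FS xs)) = length xs" using GS_len[OF l2] len by simp
    fix t assume "t < length (GS (length ns) (FS xs))"
    then have t: "t < length ns" using GS_len[OF l2] by simp
    have "GS (length ns) (FS xs) ! t = shf (spl (xs ! t)) (tr1 (xs ! t))"
      unfolding GS_nth[OF l2 t] using FS_nth[of t xs] FS_nth[of "length ns + t" xs] t len by simp
    also have "\<dots> = xs ! t" using shf_spl[OF uC[OF xu[OF t]] pos_nth[OF t]] .
    finally show "GS (length ns) (FS xs) ! t = xs ! t" .
  qed
qed

lemma FS_GS: assumes ys: "ys \<in> dsum (map su_alg ns @ replicate (length ns) (u_alg 1))"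
  shows "FS (GS (length ns) ys) = ys"
proof -
  have len: "length ys = 2 * length ns" and a: "\<And>t. t < length ns \<Longrightarrow> ys ! t \<in> su_alg (ns ! t)"
    and b: "\<And>t. t < length ns \<Longrightarrow> ys ! (length ns + t) \<in> u_alg 1"
    using ys unfolding dsumT by auto
  have lG: "length (GS (length ns) ys) = length ns" using GS_len[OF len] .
  show ?thesis
  proof (rule nth_equalityI)
    show "length (FS (GS (length ns) ys)) = length ys" using FS_len lG len by simp
    fix i assume "i < length (FS (GS (length ns) ys))"
    then have i: "i < 2 * length ns" using FS_len lG by simp
    show "FS (GS (length ns) ys) ! i = ys ! i"
    proof (cases "i < length ns")
      case True
      then show ?thesis using FS_nth[of i "GS (length ns) ys"] lG i GS_nth[OF len True]
          spl_shf(1)[OF a[OF True] b[OF True] pos_nth[OF True]] by simp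
    next
      case False
      define t where "t = i - length ns"
      have t: "t < length ns" and it: "i = length ns + t" using i False unfolding t_def by auto
      show ?thesis using FS_nth[of i "GS (length ns) ys"] lG i False GS_nth[OF len t]
          spl_shf(2)[OF a[OF t] b[OF t] pos_nth[OF t]] unfolding t_def[symmetric] it by simp
    qed
  qed
qed

lemma FS_hom:
  assumes xs: "xs \<in> dsum (map u_alg ns)" and ys: "ys \<in> dsum (map u_alg ns)"
  shows "FS (ladd xs ys) = ladd (FS xs) (FS ys)" "FS (lsc c xs) = lsc c (FS xs)"
    "FS (lbr xs ys) = lbr (FS xs) (FS ys)"
proof -
  have lx: "length xs = length ns" and xu: "\<And>t. t < length ns \<Longrightarrow> xs ! t \<in> u_alg (ns ! t)"
    using xs unfolding dsumU by auto
  have ly: "length ys = length ns" and yu: "\<And>t. t < length ns \<Longrightarrow> ys ! t \<in> u_alg (ns ! t)"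
    using ys unfolding dsumU by auto
  have cx: "\<And>t. t < length ns \<Longrightarrow> xs ! t \<in> carrier_mat (ns ! t) (ns ! t)" using xu uC by blast
  have cy: "\<And>t. t < length ns \<Longrightarrow> ys ! t \<in> carrier_mat (ns ! t) (ns ! t)" using yu uC by blast
  show "FS (ladd xs ys) = ladd (FS xs) (FS ys)"
  proof (rule nth_equalityI)
    show "length (FS (ladd xs ys)) = length (ladd (FS xs) (FS ys))" using lx ly by (simp add: FS_len ladd_def)
    fix i assume "i < length (FS (ladd xs ys))"
    then have i: "i < 2 * length ns" using lx ly by (simp add: FS_len ladd_def)
    show "FS (ladd xs ys) ! i = ladd (FS xs) (FS ys) ! i"
    proof (cases "i < length ns")
      case True
      then show ?thesis using FS_nth[of i] i lx ly spl_add[OF cx[OF True] cy[OF True]] by (simp add: ladd_def FS_len)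
    next
      case False
      then have t: "i - length ns < length ns" using i by simp
      show ?thesis using FS_nth[of i] i lx ly False tr1_add[OF cx[OF t] cy[OF t]] by (simp add: ladd_def FS_len)
    qed
  qed
  show "FS (lsc c xs) = lsc c (FS xs)"
  proof (rule nth_equalityI)
    show "length (FS (lsc c xs)) = length (lsc c (FS xs))" using lx by (simp add: FS_len lsc_def)
    fix i assume "i < length (FS (lsc c xs))"
    then have i: "i < 2 * length ns" using lx by (simp add: FS_len lsc_def)
    show "FS (lsc c xs) ! i = lsc c (FS xs) ! i"
    proof (cases "i < length ns")
      case True
      then show ?thesis using FS_nth[of i] i lx spl_rsc[OF cx[OF True]] by (simp add: lsc_def FS_len)
    next
      case False
      then have t: "i - length ns < length ns" using i by simp
      show ?thesis using FS_nth[of i] i lx False tr1_rsc[OF cx[OF t]] by (simp add: lsc_def FS_len)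
    qed
  qed
  show "FS (lbr xs ys) = lbr (FS xs) (FS ys)"
  proof (rule nth_equalityI)
    show "length (FS (lbr xs ys)) = length (lbr (FS xs) (FS ys))" using lx ly by (simp add: FS_len lbr_def)
    fix i assume "i < length (FS (lbr xs ys))"
    then have i: "i < 2 * length ns" using lx ly by (simp add: FS_len lbr_def)
    show "FS (lbr xs ys) ! i = lbr (FS xs) (FS ys) ! i"
    proof (cases "i < length ns")
      case True
      then show ?thesis using FS_nth[of i] i lx ly spl_mbr[OF cx[OF True] cy[OF True]] by (simp add: lbr_def FS_len)
    next
      case False
      then have t: "i - length ns < length ns" using i by simp
      show ?thesis using FS_nth[of i] i lx ly False tr1_mbr[OF cx[OF t] cy[OF t]] by (simp add: lbr_def FS_len)
    qed
  qed
qed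

lemma iso_compose:
  assumes f: "lie_iso f S (dsum (map u_alg ns))"
  shows "lie_iso (FS \<circ> f) S (dsum (map su_alg ns @ replicate (length ns) (u_alg 1)))"
proof -
  have bf: "bij_betw f S (dsum (map u_alg ns))" using f unfolding lie_iso_def by blast
  have fin: "\<And>A. A \<in> S \<Longrightarrow> f A \<in> dsum (map u_alg ns)" using bf bij_betwE by blast
  have bF: "bij_betw FS (dsum (map u_alg ns)) (dsum (map su_alg ns @ replicate (length ns) (u_alg 1)))"
  proof (rule bij_betw_byWitness[where f' = "GS (length ns)"])
    show "\<forall>a\<in>dsum (map u_alg ns). GS (length ns) (FS a) = a" using GS_FS by blast
    show "\<forall>a'\<in>dsum (map su_alg ns @ replicate (length ns) (u_alg 1)). FS (GS (length ns) a') = a'"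
      using FS_GS by blast
    show "FS ` dsum (map u_alg ns) \<subseteq> dsum (map su_alg ns @ replicate (length ns) (u_alg 1))"
      using FS_in by blast
    show "GS (length ns) ` dsum (map su_alg ns @ replicate (length ns) (u_alg 1)) \<subseteq> dsum (map u_alg ns)"
      using GS_in by blast
  qed
  show ?thesis unfolding lie_iso_def
  proof (intro conjI ballI allI)
    show "bij_betw (FS \<circ> f) S (dsum (map su_alg ns @ replicate (length ns) (u_alg 1)))"
      using bij_betw_trans[OF bf bF] .
    fix A B assume A: "A \<in> S" and B: "B \<in> S"
    show "(FS \<circ> f) (A + B) = ladd ((FS \<circ> f) A) ((FS \<circ> f) B)"
      using f A B FS_hom(1)[OF fin[OF A] fin[OF B]] unfolding lie_iso_def by simp
    show "(FS \<circ> f) (mbr A B) = lbr ((FS \<circ> f) A) ((FS \<circ> f) B)"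
      using f A B FS_hom(3)[OF fin[OF A] fin[OF B]] unfolding lie_iso_def by simp
  next
    fix c A assume A: "A \<in> S"
    show "(FS \<circ> f) (rsc c A) = lsc c ((FS \<circ> f) A)"
      using f A FS_hom(2)[OF fin[OF A] fin[OF A]] unfolding lie_iso_def by simp
  qed
qed

end





definition ent :: "nat \<times> nat \<Rightarrow> nat \<Rightarrow> nat \<Rightarrow> complex" where
  "ent p a b = (if fst p < snd p then (if (a, b) = p then 1 else if (b, a) = p then -1 else 0)
      else if snd p < fst p then (if (a, b) = p \<or> (b, a) = p then \<i> else 0)
      else (if (a, b) = p then \<i> else 0))"

definition bm :: "nat \<Rightarrow> nat \<times> nat \<Rightarrow> complex mat" where
  "bm N p = mat N N (\<lambda>(a, b). ent p a b)"

definition ps :: "nat \<Rightarrow> nat \<Rightarrow> (nat \<times> nat) list" where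
  "ps N k = filter (\<lambda>(i, j). i mod k = j mod k) (List.product [0..<N] [0..<N])"

definition coef :: "complex mat \<Rightarrow> nat \<times> nat \<Rightarrow> real" where
  "coef A p = (if fst p < snd p then Re (A $$ p) else Im (A $$ p))"

lemma ps_set: "set (ps N k) = {(i, j). i < N \<and> j < N \<and> i mod k = j mod k}"
  unfolding ps_def by auto

lemma ps_distinct: "distinct (ps N k)"
  unfolding ps_def by (intro distinct_filter distinct_product) auto

lemma sum_distinct_nth: "distinct xs \<Longrightarrow> (\<Sum>l<length xs. G (xs ! l)) = (\<Sum>p\<in>set xs. G p)"
proof -
  assume d: "distinct xs"
  have inj: "inj_on ((!) xs) {..<length xs}" using d by (simp add: inj_on_def nth_eq_iff_index_eq)
  have im: "(!) xs ` {..<length xs} = set xs" by (auto simp: in_set_conv_nth)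
  show ?thesis using sum.reindex[OF inj, of G] im by (simp add: comp_def)
qed

lemma ent_split: "ent p a b = (if p = (a, b) then (if a < b then 1 else \<i>) else 0)
   + (if p = (b, a) \<and> a \<noteq> b then (if b < a then -1 else \<i>) else 0)"
proof (cases p)
  case (Pair i j)
  show ?thesis unfolding Pair ent_def
    by (cases "i < j"; cases "j < i"; cases "a = i"; cases "b = j"; cases "a = j"; cases "b = i"; simp)
qed

lemma ent_pt: "w p * ent p a b = (if p = (a, b) then w p * (if a < b then 1 else \<i>) else 0)
   + (if p = (b, a) then (if a \<noteq> b then w p * (if b < a then -1 else \<i>) else 0) else 0)"
proof (cases p)
  case (Pair i j)
  show ?thesis unfolding Pair ent_def
    by (cases "i < j"; cases "j < i"; cases "a = i"; cases "b = j"; cases "a = j"; cases "b = i"; simp)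
qed

lemma sum_ent:
  fixes P :: "(nat \<times> nat) set" and w :: "nat \<times> nat \<Rightarrow> complex"
  assumes "finite P"
  shows "(\<Sum>p\<in>P. w p * ent p a b) = (if (a, b) \<in> P then w (a, b) * (if a < b then 1 else \<i>) else 0)
      + (if (b, a) \<in> P \<and> a \<noteq> b then w (b, a) * (if b < a then -1 else \<i>) else 0)"
proof -
  have "(\<Sum>p\<in>P. w p * ent p a b) = (\<Sum>p\<in>P. (if p = (a, b) then w p * (if a < b then 1 else \<i>) else 0))
     + (\<Sum>p\<in>P. (if p = (b, a) then (if a \<noteq> b then w p * (if b < a then -1 else \<i>) else 0) else 0))"
    unfolding ent_pt[of w] by (rule sum.distrib)
  also have "\<dots> = (if (a, b) \<in> P then w (a, b) * (if a < b then 1 else \<i>) else 0)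
      + (if (b, a) \<in> P \<and> a \<noteq> b then w (b, a) * (if b < a then -1 else \<i>) else 0)"
    unfolding sum.delta[OF assms] by simp
  finally show ?thesis .
qed

lemma ent_skew: "ent p a b = - cnj (ent p b a)"
proof (cases p)
  case (Pair i j)
  show ?thesis unfolding Pair ent_def
    by (cases "i < j"; cases "j < i"; cases "a = i"; cases "b = j"; cases "a = j"; cases "b = i"; simp)
qed

lemma bm_D: assumes p: "p \<in> set (ps N k)" shows "bm N p \<in> D_alg N k"
proof (rule DI)
  show "bm N p \<in> u_alg N"
  proof (rule uI)
    show "bm N p \<in> carrier_mat N N" unfolding bm_def by simp
    fix a b assume "a < N" "b < N"
    then show "bm N p $$ (a, b) = - cnj (bm N p $$ (b, a))" unfolding bm_def using ent_skew[of p a b] by simp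
  qed
  fix a b assume ab: "a < N" "b < N" "a mod k \<noteq> b mod k"
  obtain i j where pij: "p = (i, j)" and m: "i mod k = j mod k" using p unfolding ps_set by auto
  have "p \<noteq> (a, b)" "p \<noteq> (b, a)" using m ab(3) pij by auto
  then have "ent p a b = 0" unfolding ent_split by simp
  then show "bm N p $$ (a, b) = 0" unfolding bm_def using ab by simp
qed

lemma rl_entry: assumes "a < N" "b < N"
  shows "rlincomb N c (map (bm N) qs) $$ (a, b) = (\<Sum>l<length qs. complex_of_real (c l) * ent (qs ! l) a b)"
  unfolding rlincomb_def using assms by (simp add: bm_def)

lemma rl_dims[simp]: "dim_row (rlincomb N c bs) = N" "dim_col (rlincomb N c bs) = N"
  unfolding rlincomb_def by simp_all

lemma rl_carrier: "rlincomb N c bs \<in> carrier_mat N N" unfolding rlincomb_def by simp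

lemma S_img: assumes k: "0 < k" and c: "c < k"
  shows "{l. l < N \<and> l mod k = c} = (\<lambda>m. c + k * m) ` {..<bsz N k c}"
proof (intro equalityI subsetI)
  fix l assume "l \<in> {l. l < N \<and> l mod k = c}"
  then have l: "l < N" "l mod k = c" by auto
  have "l = c + k * (l div k)" using l(2) mod_mult_div_eq[of l k] by simp
  moreover have "l div k < bsz N k c" using key_div[OF k l(1)] l(2) by simp
  ultimately show "l \<in> (\<lambda>m. c + k * m) ` {..<bsz N k c}" by blast
next
  fix l assume "l \<in> (\<lambda>m. c + k * m) ` {..<bsz N k c}"
  then obtain m where m: "m < bsz N k c" "l = c + k * m" by auto
  then show "l \<in> {l. l < N \<and> l mod k = c}" using key[OF k c] c by simp
qed

lemma S_card: assumes k: "0 < k" and c: "c < k" shows "card {l. l < N \<and> l mod k = c} = bsz N k c"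
proof -
  have inj: "inj_on (\<lambda>m. c + k * m) {..<bsz N k c}" using k by (auto simp: inj_on_def)
  show ?thesis unfolding S_img[OF k c] card_image[OF inj] by simp
qed

lemma arith_id: "r \<le> k \<Longrightarrow> r * ((d + 1) * (d + 1)) + (k - r) * (d * d) = k * d ^ 2 + 2 * r * d + (r::nat)"
proof -
  assume "r \<le> k"
  then obtain s where s: "k = r + s" using le_Suc_ex by blast
  show ?thesis unfolding s by (simp add: algebra_simps power2_eq_square)
qed

lemma ps_len: assumes k: "0 < k"
  shows "length (ps N k) = k * (N div k) ^ 2 + 2 * (N mod k) * (N div k) + N mod k"
proof -
  define S where "S c = {l. l < N \<and> l mod k = c}" for c
  have "length (ps N k) = card (set (ps N k))" using distinct_card[OF ps_distinct] by simp
  also have "set (ps N k) = (\<Union>c\<in>{..<k}. S c \<times> S c)" unfolding ps_set S_def using k by auto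
  also have "card \<dots> = (\<Sum>c<k. card (S c \<times> S c))"
    by (rule card_UN_disjoint) (auto simp: S_def)
  also have "\<dots> = (\<Sum>c<k. bsz N k c * bsz N k c)"
    by (rule sum.cong) (simp_all add: card_cartesian_product S_def S_card[OF k])
  also have "\<dots> = (\<Sum>c<k. if c < N mod k then (N div k + 1) * (N div k + 1) else N div k * (N div k))"
    unfolding bsz_def by (rule sum.cong) auto
  also have "\<dots> = (N mod k) * ((N div k + 1) * (N div k + 1)) + (k - N mod k) * (N div k * (N div k))"
  proof -
    have r: "N mod k < k" using k by simp
    have e1: "{..<k} \<inter> {c. c < N mod k} = {..<N mod k}" using r by auto
    have e2: "{..<k} \<inter> - {c. c < N mod k} = {N mod k..<k}" by auto
    show ?thesis unfolding sum.If_cases[OF finite_lessThan] e1 e2 by simp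
  qed
  also have "\<dots> = k * (N div k) ^ 2 + 2 * (N mod k) * (N div k) + N mod k"
    using arith_id[of "N mod k" k "N div k"] k by (simp add: order_less_imp_le)
  finally show ?thesis .
qed

lemma span_D: assumes A: "A \<in> D_alg N k"
  shows "A = rlincomb N (\<lambda>l. coef A (ps N k ! l)) (map (bm N) (ps N k))"
proof (rule eq_matI)
  have cA: "A \<in> carrier_mat N N" using DC[OF A] .
  show "dim_row A = dim_row (rlincomb N (\<lambda>l. coef A (ps N k ! l)) (map (bm N) (ps N k)))"
    "dim_col A = dim_col (rlincomb N (\<lambda>l. coef A (ps N k ! l)) (map (bm N) (ps N k)))"
    using cA by simp_all
  fix a b assume "a < dim_row (rlincomb N (\<lambda>l. coef A (ps N k ! l)) (map (bm N) (ps N k)))"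
    "b < dim_col (rlincomb N (\<lambda>l. coef A (ps N k ! l)) (map (bm N) (ps N k)))"
  then have ab: "a < N" "b < N" using rl_carrier by auto
  define P where "P = set (ps N k)"
  have fP: "finite P" unfolding P_def by simp
  have "rlincomb N (\<lambda>l. coef A (ps N k ! l)) (map (bm N) (ps N k)) $$ (a, b)
      = (\<Sum>l<length (ps N k). complex_of_real (coef A (ps N k ! l)) * ent (ps N k ! l) a b)"
    by (rule rl_entry[OF ab])
  also have "\<dots> = (\<Sum>p\<in>P. complex_of_real (coef A p) * ent p a b)"
    unfolding P_def by (rule sum_distinct_nth[OF ps_distinct])
  also have "\<dots> = (if (a, b) \<in> P then complex_of_real (coef A (a, b)) * (if a < b then 1 else \<i>) else 0)
      + (if (b, a) \<in> P \<and> a \<noteq> b then complex_of_real (coef A (b, a)) * (if b < a then -1 else \<i>) else 0)"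
    by (rule sum_ent[OF fP])
  also have "\<dots> = A $$ (a, b)"
  proof (cases "a mod k = b mod k")
    case True
    then have inP: "(a, b) \<in> P" "(b, a) \<in> P" unfolding P_def ps_set using ab by auto
    have sk: "A $$ (b, a) = - cnj (A $$ (a, b))" using uE[OF DU[OF A] ab(2) ab(1)] .
    have re: "Re (A $$ (b, a)) = - Re (A $$ (a, b))" and im: "Im (A $$ (b, a)) = Im (A $$ (a, b))"
      using sk by simp_all
    show ?thesis
    proof (cases "a < b")
      case True
      then show ?thesis using inP im by (simp add: coef_def complex_eq_iff)
    next
      case False
      show ?thesis
      proof (cases "b < a")
        case True
        then show ?thesis using inP re by (simp add: coef_def complex_eq_iff)
      next
        case False
        then have "a = b" using \<open>\<not> a < b\<close> by simp
        then have "Re (A $$ (a, b)) = 0" using re by simp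
        then show ?thesis using inP \<open>a = b\<close> by (simp add: coef_def complex_eq_iff)
      qed
    qed
  next
    case False
    then have "(a, b) \<notin> P" "(b, a) \<notin> P" unfolding P_def ps_set by auto
    then show ?thesis using DZ[OF A ab False] by simp
  qed
  finally show "A $$ (a, b) = rlincomb N (\<lambda>l. coef A (ps N k ! l)) (map (bm N) (ps N k)) $$ (a, b)" by simp
qed

lemma indep_D: assumes z: "rlincomb N c (map (bm N) (ps N k)) = 0\<^sub>m N N" and l: "l < length (ps N k)"
  shows "c l = 0"
proof -
  define L where "L = length (ps N k)"
  define iv where "iv = the_inv_into {..<L} ((!) (ps N k))"
  define P where "P = set (ps N k)"
  define w where "w p = complex_of_real (c (iv p))" for p
  have fP: "finite P" unfolding P_def by simp
  have inj: "inj_on ((!) (ps N k)) {..<L}" using ps_distinct unfolding L_def by (simp add: inj_on_def nth_eq_iff_index_eq)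
  have ivn: "\<And>l. l < L \<Longrightarrow> iv (ps N k ! l) = l" unfolding iv_def using the_inv_into_f_f[OF inj] by simp
  have E: "(\<Sum>p\<in>P. w p * ent p a b) = 0" if ab: "a < N" "b < N" for a b
  proof -
    have "0 = rlincomb N c (map (bm N) (ps N k)) $$ (a, b)" using z ab by simp
    also have "\<dots> = (\<Sum>l<L. complex_of_real (c l) * ent (ps N k ! l) a b)" unfolding L_def by (rule rl_entry[OF ab])
    also have "\<dots> = (\<Sum>l<L. w (ps N k ! l) * ent (ps N k ! l) a b)" unfolding w_def by (rule sum.cong) (simp_all add: ivn)
    also have "\<dots> = (\<Sum>p\<in>P. w p * ent p a b)" unfolding P_def L_def by (rule sum_distinct_nth[OF ps_distinct])
    finally show ?thesis by simp
  qed
  have W: "w p = 0" if p: "p \<in> P" for p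
  proof -
    obtain i j where pij: "p = (i, j)" by fastforce
    have ij: "i < N" "j < N" "i mod k = j mod k" using p unfolding pij P_def ps_set by auto
    have ji: "(j, i) \<in> P" using ij unfolding P_def ps_set by auto
    have ip: "(i, j) \<in> P" using p pij by simp
    have wr: "\<And>q. Im (w q) = 0" unfolding w_def by simp
    show ?thesis
    proof (cases "i < j")
      case True
      have "w (i, j) + w (j, i) * \<i> = 0" using E[OF ij(1) ij(2)] unfolding sum_ent[OF fP] using True ip ji by simp
      then have "Re (w (i, j) + w (j, i) * \<i>) = 0" by simp
      then show ?thesis unfolding pij using wr[of "(i, j)"] wr[of "(j, i)"] by (simp add: complex_eq_iff)
    next
      case False
      show ?thesis
      proof (cases "j < i")
        case True
        have "w (j, i) + w (i, j) * \<i> = 0" using E[OF ij(2) ij(1)] unfolding sum_ent[OF fP] using True ip ji by simp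
        then have "Im (w (j, i) + w (i, j) * \<i>) = 0" by simp
        then show ?thesis unfolding pij using wr[of "(i, j)"] wr[of "(j, i)"] by (simp add: complex_eq_iff)
      next
        case False
        then have "i = j" using \<open>\<not> i < j\<close> by simp
        have "w (i, i) * \<i> = 0" using E[OF ij(1) ij(1)] unfolding sum_ent[OF fP] using ip \<open>i = j\<close> by simp
        then show ?thesis unfolding pij \<open>i = j\<close> by simp
      qed
    qed
  qed
  have "ps N k ! l \<in> P" unfolding P_def using l by simp
  then have "w (ps N k ! l) = 0" by (rule W)
  then show ?thesis unfolding w_def using ivn[of l] l unfolding L_def by simp
qed

lemma dim_D: assumes k: "0 < k"
  shows "real_dim_eq N (D_alg N k) (k * (N div k) ^ 2 + 2 * (N mod k) * (N div k) + N mod k)"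
  unfolding real_dim_eq_def
proof (rule exI[where x = "map (bm N) (ps N k)"], intro conjI allI impI ballI)
  show "length (map (bm N) (ps N k)) = k * (N div k) ^ 2 + 2 * (N mod k) * (N div k) + N mod k"
    using ps_len[OF k] by simp
  show "set (map (bm N) (ps N k)) \<subseteq> D_alg N k" using bm_D by auto
  fix c i assume "rlincomb N c (map (bm N) (ps N k)) = 0\<^sub>m N N"
    "i < k * (N div k) ^ 2 + 2 * (N mod k) * (N div k) + N mod k"
  then show "c i = 0" using indep_D ps_len[OF k] by simp
next
  fix A assume "A \<in> D_alg N k"
  then show "\<exists>c. A = rlincomb N c (map (bm N) (ps N k))" using span_D by blast
qed

theorem mainTheorem3:
  fixes N k :: nat
  assumes "N \<ge> 1" and "0 < k" and "k \<le> N"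
  defines "d \<equiv> N div k" and "r \<equiv> N - k * (N div k)"
  shows "real_lie_subalg_u (D_alg N k) N
    \<and> lie_isomorphic (D_alg N k)
        (dsum (replicate (k - r) (u_alg d) @ replicate r (u_alg (d + 1))))
    \<and> lie_isomorphic (D_alg N k)
        (dsum (replicate (k - r) (su_alg d) @ replicate r (su_alg (d + 1))
               @ replicate k (u_alg 1)))
    \<and> real_dim_eq N (D_alg N k) (k * d ^ 2 + 2 * r * d + r)
    \<and> k * d ^ 2 + 2 * r * d + r = d * (N + r) + r"
proof -
  have k: "0 < k" by (rule assms(2))
  have rr: "r = N mod k" unfolding r_def using mult_div_mod_eq[of k N] by linarith
  have rk: "r < k" unfolding rr using k by simp
  have d1: "1 \<le> d"
  proof -
    have "k div k \<le> N div k" using assms(3) by (rule div_le_mono)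
    then show ?thesis unfolding d_def using k by simp
  qed
  have Nkd: "N = k * d + r" unfolding rr d_def by simp
  have L1: "replicate (k - r) (u_alg d) @ replicate r (u_alg (d + 1)) = map u_alg (nsz N k)"
    unfolding nsz_def rr d_def by simp
  have L2: "replicate (k - r) (su_alg d) @ replicate r (su_alg (d + 1)) @ replicate k (u_alg 1)
      = map su_alg (nsz N k) @ replicate (length (nsz N k)) (u_alg 1)"
    unfolding nsz_len[OF k] unfolding nsz_def rr[symmetric] d_def[symmetric] by simp
  have pos: "\<And>n. n \<in> set (nsz N k) \<Longrightarrow> 0 < n"
    unfolding nsz_def rr[symmetric] d_def[symmetric] using d1 by (auto split: if_splits)
  have I1: "lie_iso (fD N k) (D_alg N k) (dsum (map u_alg (nsz N k)))" by (rule iso1[OF k])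
  have I2: "lie_iso (FS \<circ> fD N k) (D_alg N k) (dsum (map su_alg (nsz N k) @ replicate (length (nsz N k)) (u_alg 1)))"
    by (rule iso_compose[OF pos I1])
  have "real_dim_eq N (D_alg N k) (k * d ^ 2 + 2 * r * d + r)"
    unfolding rr d_def by (rule dim_D[OF k])
  moreover have "k * d ^ 2 + 2 * r * d + r = d * (N + r) + r"
    unfolding Nkd by (simp add: algebra_simps power2_eq_square)
  ultimately show ?thesis
    unfolding L1 L2 lie_isomorphic_def using D_closed I1 I2 by blast
qed


end
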